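(* Let $\omega$ be a non-quasianalytic concave weight function and let $\sigma$ be a heir of $\omega$. Then for each $n\in\mathbb{N}_{>0}$ there exist $m\in\mathbb{N}_{>0}$, $M>0$ and $0<r_0<1/2$ such that for every $0<r<r_0$ there is $g_{n,r}\in C^\infty(\mathbb{R})$ with $0\le g_{n,r}\le1$, $g_{n,r}(x)=0$ for $x\le-r$, $g_{n,r}(x)=1$ for $x\ge r$, and $$\sup_{x\in\mathbb{R},\,j\in\mathbb{N}}\frac{|g^{(j)}_{n,r}(x)|}{W^m_j}\le M\exp\!\left(\tfrac1n\sigma^*(nr)\right).$$
   Context: A weight function is a continuous increasing $\omega:[0,\infty)\to[0,\infty)$ with $\omega(0)=0$, $\omega(t)\to\infty$, $\omega(2t)=O(\omega(t))$, $\omega(t)=O(t)$, $\log t=o(\omega(t))$, and $\varphi(t)=\omega(e^t)$ convex; non-quasianalytic if $\int_0^\infty\frac{\omega(t)}{1+t^2}dt<\infty$. Normalizing $\omega|_{[0,1]}=0$, $\varphi^*(t)=\sup_{s\ge0}(st-\varphi(s))$ and $W^x_k=\exp(\frac1x\varphi^*(xk))$ is the associated weight matrix of $\omega$. A heir of $\omega$ is a weight function $\sigma$ with $\sigma(t)=o(t)$ as $t\to\infty$ and $\int_1^\infty\frac{\omega(tu)}{u^2}du\le C\sigma(t)+C$ for all $t>0$ and some $C>0$. $\sigma^*(t)=\sup_{s\ge0}(\sigma(s)-st)$. *)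

theory Defs
  imports "HOL-Analysis.Analysis" "HOL-Library.Landau_Symbols"
begin

definition weight_function :: "(real \<Rightarrow> real) \<Rightarrow> bool" where
  "weight_function \<omega> \<longleftrightarrow>
     continuous_on {0..} \<omega> \<and> mono_on {0..} \<omega> \<and> (\<forall>t\<ge>0. \<omega> t \<ge> 0) \<and>
     \<omega> 0 = 0 \<and> filterlim \<omega> at_top at_top \<and>
     (\<lambda>t. \<omega> (2 * t)) \<in> O[at_top](\<omega>) \<and>
     \<omega> \<in> O[at_top](\<lambda>t. t) \<and>
     ln \<in> o[at_top](\<omega>) \<and>
     convex_on UNIV (\<lambda>t. \<omega> (exp t))"

definition non_quasianalytic :: "(real \<Rightarrow> real) \<Rightarrow> bool" where
  "non_quasianalytic \<omega> \<longleftrightarrow>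
     (\<integral>\<^sup>+ t\<in>{0..}. ennreal (\<omega> t / (1 + t\<^sup>2)) \<partial>lborel) < \<infinity>"

definition concave_weight :: "(real \<Rightarrow> real) \<Rightarrow> bool" where
  "concave_weight \<omega> \<longleftrightarrow> concave_on {0..} \<omega>"

definition heir :: "(real \<Rightarrow> real) \<Rightarrow> (real \<Rightarrow> real) \<Rightarrow> bool" where
  "heir \<omega> \<sigma> \<longleftrightarrow> weight_function \<sigma> \<and> \<sigma> \<in> o[at_top](\<lambda>t. t) \<and>
     (\<exists>C>0. \<forall>t>0. (\<integral>\<^sup>+ u\<in>{1..}. ennreal (\<omega> (t * u) / u\<^sup>2) \<partial>lborel)
                    \<le> ennreal (C * \<sigma> t + C))"

definition phi_star :: "(real \<Rightarrow> real) \<Rightarrow> real \<Rightarrow> real" where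
  "phi_star \<omega> t = (SUP s\<in>{0..}. s * t - \<omega> (exp s))"

definition weight_matrix :: "(real \<Rightarrow> real) \<Rightarrow> real \<Rightarrow> nat \<Rightarrow> real" where
  "weight_matrix \<omega> x k = exp (phi_star \<omega> (x * real k) / x)"

definition sigma_star :: "(real \<Rightarrow> real) \<Rightarrow> real \<Rightarrow> real" where
  "sigma_star \<sigma> t = (SUP s\<in>{0..}. \<sigma> s - s * t)"

definition smooth_fun :: "(real \<Rightarrow> real) \<Rightarrow> bool" where
  "smooth_fun g \<longleftrightarrow> (\<forall>j x. (deriv ^^ j) g differentiable (at x))"

end

theory Submission
  imports Defs "HOL-Analysis.Harmonic_Numbers"
begin


definition Av :: "real \<Rightarrow> (real \<Rightarrow> real) \<Rightarrow> real \<Rightarrow> real" where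
  "Av a f x = integral {x-a..x} f / a"

lemma Av_deriv:
  assumes f: "continuous_on UNIV f" and a: "a > 0"
  shows "(Av a f has_real_derivative (f x - f (x - a)) / a) (at x)"
proof -
  define lo where "lo = x - a - 1"
  define hi where "hi = x + 1"
  define P where "P = (\<lambda>y. integral {lo..y} f)"
  have fc: "continuous_on {lo..hi} f" using f continuous_on_subset by blast
  have P1: "(P has_real_derivative f y) (at y)" if "lo < y" "y < hi" for y
  proof -
    have "(P has_real_derivative f y) (at y within {lo..hi})"
      unfolding P_def using integral_has_real_derivative[OF fc] that by auto
    moreover have "at y within {lo..hi} = at y"
      using that by (intro at_within_interior) auto
    ultimately show ?thesis by simp
  qed
  have d1: "(P has_real_derivative f x) (at x)" using P1 a by (auto simp: lo_def hi_def)
  have d2: "((\<lambda>y. P (y - a)) has_real_derivative f (x - a)) (at x)"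
  proof -
    have "(P has_real_derivative f (x - a)) (at (x - a))" using P1 a by (auto simp: lo_def hi_def)
    moreover have "((\<lambda>y. y - a) has_real_derivative 1) (at x)"
      by (auto intro!: derivative_eq_intros)
    ultimately show ?thesis using DERIV_chain2[of P "f (x-a)" "\<lambda>y. y - a" x 1 UNIV] by simp
  qed
  have d: "((\<lambda>y. (P y - P (y - a)) / a) has_real_derivative (f x - f (x - a)) / a) (at x)"
    using DERIV_cdivide[OF DERIV_diff[OF d1 d2], of a] by simp
  show ?thesis
  proof (rule has_field_derivative_transform_within_open[OF d, of "{x - 1/2<..<x+1/2}"])
    fix y assume y: "y \<in> {x - 1/2<..<x+1/2}"
    have int: "f integrable_on {lo..y}"
      by (rule integrable_continuous_interval) (use f continuous_on_subset in blast)
    have "integral {lo..y-a} f + integral {y-a..y} f = integral {lo..y} f"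
      by (rule Henstock_Kurzweil_Integration.integral_combine[OF _ _ int]) (use y a in \<open>auto simp: lo_def\<close>)
    then show "(P y - P (y - a)) / a = Av a f y"
      unfolding P_def Av_def by (simp add: algebra_simps)
  qed auto
qed

lemma Av_cont:
  assumes f: "continuous_on UNIV f" and a: "a > 0"
  shows "continuous_on UNIV (Av a f)"
  using Av_deriv[OF assms]
  by (meson DERIV_continuous continuous_at_imp_continuous_on)

lemma Av_contract:
  assumes f: "continuous_on UNIV f" and h: "continuous_on UNIV h" and a: "a > 0"
    and le: "\<And>t. \<bar>f t - h t\<bar> \<le> e"
  shows "\<bar>Av a f x - Av a h x\<bar> \<le> e"
proof -
  have "Av a f x - Av a h x = integral {x-a..x} (\<lambda>t. f t - h t) / a"
    unfolding Av_def
    by (subst integral_diff) (auto intro!: integrable_continuous_interval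
        intro: continuous_on_subset[OF f] continuous_on_subset[OF h] simp: diff_divide_distrib)
  moreover have "norm (integral {x-a..x} (\<lambda>t. f t - h t)) \<le> e * (x - (x - a))"
    by (rule integral_bound) (use a le in \<open>auto intro!: continuous_intros
        intro: continuous_on_subset[OF f] continuous_on_subset[OF h]\<close>)
  ultimately show ?thesis using a by (simp add: divide_le_eq abs_divide)
qed

lemma Av_bounds:
  assumes f: "continuous_on UNIV f" and a: "a > 0"
    and le: "\<And>t. lo \<le> f t \<and> f t \<le> hi"
  shows "lo \<le> Av a f x \<and> Av a f x \<le> hi"
proof -
  have int: "f integrable_on {x-a..x}"
    by (rule integrable_continuous_interval) (use f continuous_on_subset in blast)
  have "integral {x-a..x} (\<lambda>_. lo) \<le> integral {x-a..x} f"
    by (rule integral_le) (use int le in auto)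
  moreover have "integral {x-a..x} f \<le> integral {x-a..x} (\<lambda>_. hi)"
    by (rule integral_le) (use int le in auto)
  ultimately show ?thesis using a by (simp add: Av_def field_simps)
qed

lemma Av_zero:
  assumes a: "a > 0" and z: "\<And>t. t \<le> c \<Longrightarrow> f t = 0" and x: "x \<le> c"
  shows "Av a f x = 0"
proof -
  have "integral {x-a..x} f = integral {x-a..x} (\<lambda>_. 0::real)"
    by (rule integral_cong) (use z x in auto)
  then show ?thesis by (simp add: Av_def)
qed

lemma Av_one:
  assumes a: "a > 0" and z: "\<And>t. t \<ge> c \<Longrightarrow> f t = 1" and x: "x \<ge> c + a"
  shows "Av a f x = 1"
proof -
  have "integral {x-a..x} f = integral {x-a..x} (\<lambda>_. 1::real)"
    by (rule integral_cong) (use z x in auto)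
  then show ?thesis using a by (simp add: Av_def)
qed



lemma Av_lip_close:
  assumes f: "continuous_on UNIV f" and a: "a > 0"
    and L: "\<And>s t. \<bar>f s - f t\<bar> \<le> L * \<bar>s - t\<bar>"
  shows "\<bar>Av a f x - f x\<bar> \<le> a * L"
proof -
  have int: "f integrable_on {x-a..x}"
    by (rule integrable_continuous_interval) (use f continuous_on_subset in blast)
  have "Av a f x - f x = integral {x-a..x} (\<lambda>t. f t - f x) / a"
  proof -
    have "integral {x-a..x} (\<lambda>t. f t - f x) = integral {x-a..x} f - integral {x-a..x} (\<lambda>t. f x)"
      by (rule integral_diff[OF int]) (intro integrable_continuous_interval continuous_intros)
    then show ?thesis using a by (simp add: Av_def field_simps)
  qed
  moreover have "norm (integral {x-a..x} (\<lambda>t. f t - f x)) \<le> (a * L) * (x - (x - a))"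
  proof (rule integral_bound)
    show "continuous_on {x - a..x} (\<lambda>t. f t - f x)"
      by (intro continuous_intros) (use f continuous_on_subset in blast)
    fix t assume t: "t \<in> {x-a..x}"
    have "\<bar>f t - f x\<bar> \<le> L * \<bar>t - x\<bar>" by (rule L)
    also have "\<dots> \<le> L * a"
    proof (rule mult_left_mono)
      show "0 \<le> L" using L[of 1 0] by simp
    qed (use t in auto)
    finally show "norm (f t - f x) \<le> a * L" by (simp add: mult.commute)
  qed (use a in auto)
  ultimately show ?thesis using a by (simp add: divide_le_eq abs_divide)
qed

definition ramp :: "real \<Rightarrow> real \<Rightarrow> real \<Rightarrow> real" where
  "ramp c b x = max 0 (min 1 ((x - c) / b))"

lemma ramp_props:
  assumes b: "b > 0"
  shows "continuous_on UNIV (ramp c b)"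
    and "\<And>x. 0 \<le> ramp c b x \<and> ramp c b x \<le> 1"
    and "\<And>x. x \<le> c \<Longrightarrow> ramp c b x = 0"
    and "\<And>x. x \<ge> c + b \<Longrightarrow> ramp c b x = 1"
    and "\<And>s t. \<bar>ramp c b s - ramp c b t\<bar> \<le> (1/b) * \<bar>s - t\<bar>"
proof -
  show "continuous_on UNIV (ramp c b)" unfolding ramp_def by (intro continuous_intros) (use b in auto)
  show "\<And>x. 0 \<le> ramp c b x \<and> ramp c b x \<le> 1" unfolding ramp_def by auto
  show "\<And>x. x \<le> c \<Longrightarrow> ramp c b x = 0" unfolding ramp_def using b
    by (auto simp: divide_le_0_iff)
  show "\<And>x. x \<ge> c + b \<Longrightarrow> ramp c b x = 1" unfolding ramp_def using b
    by (auto simp: le_divide_eq)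
  fix s t
  have "\<bar>(s - c)/b - (t - c)/b\<bar> = (1/b) * \<bar>s - t\<bar>" using b
    by (simp add: diff_divide_distrib[symmetric] abs_divide)
  moreover have "\<bar>max 0 (min 1 u) - max 0 (min 1 v)\<bar> \<le> \<bar>u - v\<bar>" for u v :: real
    by (auto simp: max_def min_def abs_if)
  ultimately show "\<bar>ramp c b s - ramp c b t\<bar> \<le> (1/b) * \<bar>s - t\<bar>"
    unfolding ramp_def by metis
qed

context
  fixes a :: "nat \<Rightarrow> real" and b c :: real
  assumes apos: "\<And>i. a i > 0" and asum: "summable a" and bpos: "b > 0"
begin

primrec FF :: "nat \<Rightarrow> nat \<Rightarrow> real \<Rightarrow> real" where
  "FF 0 k = ramp c b"
| "FF (Suc d) k = Av (a k) (FF d (Suc k))"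

lemma FF_cont: "continuous_on UNIV (FF d k)"
  by (induction d arbitrary: k) (auto intro: Av_cont apos ramp_props(1)[OF bpos])

lemma FF_bounds: "0 \<le> FF d k x \<and> FF d k x \<le> 1"
proof (induction d arbitrary: k x)
  case 0 then show ?case using ramp_props(2)[OF bpos] by simp
next
  case (Suc d) then show ?case using Av_bounds[OF FF_cont apos, where lo=0 and hi=1] by simp
qed

lemma FF_zero: "x \<le> c \<Longrightarrow> FF d k x = 0"
proof (induction d arbitrary: k x)
  case 0 then show ?case using ramp_props(3)[OF bpos] by simp
next
  case (Suc d) then show ?case using Av_zero[OF apos, of c] by simp
qed

lemma FF_one: "x \<ge> c + b + (\<Sum>i<d. a (k + i)) \<Longrightarrow> FF d k x = 1"
proof (induction d arbitrary: k x)
  case 0 then show ?case using ramp_props(4)[OF bpos] by simp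
next
  case (Suc d)
  have "(\<Sum>i<Suc d. a (k + i)) = a k + (\<Sum>i<d. a (Suc k + i))"
    by (subst sum.lessThan_Suc_shift) simp
  then have "\<And>t. t \<ge> c + b + (\<Sum>i<d. a (Suc k + i)) \<Longrightarrow> FF d (Suc k) t = 1"
    "x \<ge> c + b + (\<Sum>i<d. a (Suc k + i)) + a k"
    using Suc by auto
  then show ?case using Av_one[of "a k" "c + b + (\<Sum>i<d. a (Suc k + i))" "FF d (Suc k)" x, OF apos] by simp
qed

lemma FF_step: "\<bar>FF (Suc d) k x - FF d k x\<bar> \<le> a (k + d) / b"
proof (induction d arbitrary: k x)
  case 0
  have "\<bar>Av (a k) (ramp c b) x - ramp c b x\<bar> \<le> a k * (1/b)"
    by (rule Av_lip_close[OF ramp_props(1)[OF bpos] apos ramp_props(5)[OF bpos]])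
  then show ?case by simp
next
  case (Suc d)
  have "\<bar>Av (a k) (FF (Suc d) (Suc k)) x - Av (a k) (FF d (Suc k)) x\<bar> \<le> a (Suc k + d) / b"
    by (rule Av_contract[OF FF_cont FF_cont apos]) (use Suc[of "Suc k"] in \<open>simp del: FF.simps(2)\<close>)
  then show ?case by simp
qed

definition HH :: "nat \<Rightarrow> real \<Rightarrow> real" where
  "HH k x = ramp c b x + (\<Sum>i. FF (Suc i) k x - FF i k x)"

lemma tail_summable: "summable (\<lambda>i. a (k + i) / b)"
  using summable_ignore_initial_segment[OF asum, of k] by (simp add: add.commute)

lemma diff_summable: "summable (\<lambda>i. FF (Suc i) k x - FF i k x)"
  by (rule summable_comparison_test[OF _ tail_summable[of k]]) (use FF_step in auto)

lemma FF_telescope: "FF d k x = ramp c b x + (\<Sum>i<d. FF (Suc i) k x - FF i k x)"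
  by (subst sum_lessThan_telescope) simp

lemma HH_tail: "\<bar>HH k x - FF d k x\<bar> \<le> (\<Sum>i. a (k + (i + d)) / b)"
proof -
  have "HH k x - FF d k x = (\<Sum>i. FF (Suc (i + d)) k x - FF (i + d) k x)"
    unfolding HH_def FF_telescope[of d]
    using suminf_split_initial_segment[OF diff_summable[of k x], of d] by simp
  moreover have "\<bar>\<Sum>i. FF (Suc (i + d)) k x - FF (i + d) k x\<bar> \<le> (\<Sum>i. a (k + (i + d)) / b)"
  proof -
    have s1: "summable (\<lambda>i. FF (Suc (i + d)) k x - FF (i + d) k x)"
      using summable_ignore_initial_segment[OF diff_summable[of k x], of d] by simp
    have s2: "summable (\<lambda>i. a (k + (i + d)) / b)"
      using summable_ignore_initial_segment[OF tail_summable[of k], of d] by simp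
    have s3: "summable (\<lambda>i. - (a (k + (i + d)) / b))" using summable_minus[OF s2] .
    have st: "\<bar>FF (Suc (i + d)) k x - FF (i + d) k x\<bar> \<le> a (k + (i + d)) / b" for i
      by (rule FF_step)
    have st': "- (a (k + (i + d)) / b) \<le> FF (Suc (i + d)) k x - FF (i + d) k x \<and> FF (Suc (i + d)) k x - FF (i + d) k x \<le> a (k + (i + d)) / b" for i
      using st[of i] by linarith
    have "(\<Sum>i. FF (Suc (i + d)) k x - FF (i + d) k x) \<le> (\<Sum>i. a (k + (i + d)) / b)"
      by (rule suminf_le[OF _ s1 s2]) (use st' in blast)
    moreover have "(\<Sum>i. - (a (k + (i + d)) / b)) \<le> (\<Sum>i. FF (Suc (i + d)) k x - FF (i + d) k x)"
      by (rule suminf_le[OF _ s3 s1]) (use st' in blast)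
    ultimately show ?thesis using suminf_minus[OF s2] by linarith
  qed
  ultimately show ?thesis by simp
qed

lemma tail_tends: "(\<lambda>d. (\<Sum>i. a (k + (i + d)) / b)) \<longlonglongrightarrow> 0"
  using suminf_exist_split2[OF tail_summable[of k]] by (simp add: add.assoc)

lemma FF_uniform: "uniform_limit UNIV (\<lambda>d. FF d k) (HH k) sequentially"
proof (rule uniform_limitI)
  fix e :: real assume e: "e > 0"
  from tail_tends[of k] e have "eventually (\<lambda>d. (\<Sum>i. a (k + (i + d)) / b) < e) sequentially"
    by (rule order_tendstoD)
  then show "\<forall>\<^sub>F d in sequentially. \<forall>x\<in>UNIV. dist (FF d k x) (HH k x) < e"
  proof eventually_elim
    case (elim d)
    then show ?case using HH_tail[of k _ d] by (auto simp: dist_real_def abs_minus_commute intro: le_less_trans)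
  qed
qed

lemma HH_cont: "continuous_on UNIV (HH k)"
  by (rule uniform_limit_theorem[OF _ FF_uniform]) (auto intro!: always_eventually FF_cont)

lemma FF_lim: "(\<lambda>d. FF d k x) \<longlonglongrightarrow> HH k x"
proof -
  have "(\<lambda>d. ramp c b x + (\<Sum>i<d. FF (Suc i) k x - FF i k x)) \<longlonglongrightarrow> HH k x"
    unfolding HH_def by (intro tendsto_add tendsto_const summable_LIMSEQ diff_summable)
  then show ?thesis by (simp only: FF_telescope[symmetric])
qed

lemma HH_rec: "HH k x = Av (a k) (HH (Suc k)) x"
proof -
  have l1: "(\<lambda>d. FF (Suc d) k x) \<longlonglongrightarrow> HH k x"
    using LIMSEQ_Suc[OF FF_lim] .
  have l2: "(\<lambda>d. FF (Suc d) k x) \<longlonglongrightarrow> Av (a k) (HH (Suc k)) x"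
  proof -
    have "(\<lambda>d. FF (Suc d) k x - Av (a k) (HH (Suc k)) x) \<longlonglongrightarrow> 0"
    proof (rule Lim_null_comparison[OF _ tail_tends[of "Suc k"]])
      show "\<forall>\<^sub>F d in sequentially. norm (FF (Suc d) k x - Av (a k) (HH (Suc k)) x)
              \<le> (\<Sum>i. a (Suc k + (i + d)) / b)"
      proof (intro always_eventually allI)
        fix d
        have "\<bar>Av (a k) (FF d (Suc k)) x - Av (a k) (HH (Suc k)) x\<bar> \<le> (\<Sum>i. a (Suc k + (i + d)) / b)"
          by (rule Av_contract[OF FF_cont HH_cont apos]) (use HH_tail[of "Suc k" _ d] in \<open>auto simp: abs_minus_commute\<close>)
        then show "norm (FF (Suc d) k x - Av (a k) (HH (Suc k)) x) \<le> (\<Sum>i. a (Suc k + (i + d)) / b)"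
          by simp
      qed
    qed
    then show ?thesis by (simp add: LIM_zero_iff)
  qed
  show ?thesis using LIMSEQ_unique[OF l1 l2] .
qed

lemma HH_bounds: "0 \<le> HH k x \<and> HH k x \<le> 1"
  using FF_lim[of k x] FF_bounds
  by (metis LIMSEQ_le_const LIMSEQ_le_const2)

lemma HH_zero: "x \<le> c \<Longrightarrow> HH k x = 0"
  using FF_lim[of k x] FF_zero[of x] by (simp add: LIMSEQ_const_iff)

lemma HH_one:
  assumes "x \<ge> c + b + (\<Sum>i. a (k + i))"
  shows "HH k x = 1"
proof -
  have "FF d k x = 1" for d
  proof (rule FF_one)
    have "(\<Sum>i<d. a (k + i)) \<le> (\<Sum>i. a (k + i))"
      using summable_ignore_initial_segment[OF asum, of k] apos
      by (intro sum_le_suminf) (auto simp: add.commute less_imp_le)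
    then show "x \<ge> c + b + (\<Sum>i<d. a (k + i))" using assms by simp
  qed
  then show ?thesis using FF_lim[of k x] by (simp add: LIMSEQ_const_iff)
qed

primrec EE :: "nat \<Rightarrow> nat \<Rightarrow> real \<Rightarrow> real" where
  "EE 0 k = HH k"
| "EE (Suc j) k = (\<lambda>x. (EE j (Suc k) x - EE j (Suc k) (x - a k)) / a k)"

lemma EE_deriv: "(EE j k has_real_derivative EE (Suc j) k x) (at x)"
proof (induction j arbitrary: k x)
  case 0
  have "(Av (a k) (HH (Suc k)) has_real_derivative (HH (Suc k) x - HH (Suc k) (x - a k)) / a k) (at x)"
    by (rule Av_deriv[OF HH_cont apos])
  moreover have "Av (a k) (HH (Suc k)) = HH k" using HH_rec by (simp add: fun_eq_iff)
  ultimately show ?case by simp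
next
  case (Suc j)
  have d1: "(EE j (Suc k) has_real_derivative EE (Suc j) (Suc k) x) (at x)" by (rule Suc)
  have d2: "((\<lambda>y. EE j (Suc k) (y - a k)) has_real_derivative EE (Suc j) (Suc k) (x - a k)) (at x)"
  proof -
    have "(EE j (Suc k) has_real_derivative EE (Suc j) (Suc k) (x - a k)) (at (x - a k))" by (rule Suc)
    moreover have "((\<lambda>y. y - a k) has_real_derivative 1) (at x)"
      by (auto intro!: derivative_eq_intros)
    ultimately show ?thesis using DERIV_chain2[of "EE j (Suc k)" _ "\<lambda>y. y - a k" x 1 UNIV] by simp
  qed
  show ?case using DERIV_cdivide[OF DERIV_diff[OF d1 d2], of "a k"] by simp
qed

lemma EE_bound: "\<bar>EE j k x\<bar> \<le> (\<Prod>i<j. 2 / a (k + i))"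
proof (induction j arbitrary: k x)
  case 0 then show ?case using HH_bounds by simp
next
  case (Suc j)
  have p: "(\<Prod>i<Suc j. 2 / a (k + i)) = (2 / a k) * (\<Prod>i<j. 2 / a (Suc k + i))"
    by (subst prod.lessThan_Suc_shift) simp
  have "\<bar>EE j (Suc k) x - EE j (Suc k) (x - a k)\<bar> \<le> 2 * (\<Prod>i<j. 2 / a (Suc k + i))"
    using Suc[of "Suc k" x] Suc[of "Suc k" "x - a k"] by linarith
  then have "\<bar>EE j (Suc k) x - EE j (Suc k) (x - a k)\<bar> / a k \<le> 2 * (\<Prod>i<j. 2 / a (Suc k + i)) / a k"
    using apos[of k] by (simp add: divide_right_mono)
  have e: "\<bar>EE (Suc j) k x\<bar> = \<bar>EE j (Suc k) x - EE j (Suc k) (x - a k)\<bar> / a k"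
    using apos[of k] by (simp add: abs_divide)
  have q: "2 * (\<Prod>i<j. 2 / a (Suc k + i)) / a k = (\<Prod>i<Suc j. 2 / a (k + i))"
    unfolding p by simp
  show ?case unfolding e q[symmetric] by fact
qed

lemma deriv_HH: "(deriv ^^ j) (HH 0) = EE j 0"
proof (induction j)
  case 0 then show ?case by simp
next
  case (Suc j)
  show ?case using EE_deriv[of j 0] by (simp add: Suc fun_eq_iff DERIV_imp_deriv)
qed

end

lemma construction:
  fixes a :: "nat \<Rightarrow> real" and b c :: real
  assumes apos: "\<And>i. a i > 0" and asum: "summable a" and bpos: "b > 0"
  shows "\<exists>g. smooth_fun g \<and> (\<forall>x. 0 \<le> g x \<and> g x \<le> 1) \<and> (\<forall>x. x \<le> c \<longrightarrow> g x = 0)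
     \<and> (\<forall>x. x \<ge> c + b + suminf a \<longrightarrow> g x = 1)
     \<and> (\<forall>j x. \<bar>(deriv ^^ j) g x\<bar> \<le> (\<Prod>i<j. 2 / a i))"
proof (intro exI conjI allI impI)
  let ?g = "HH a b c 0"
  show "smooth_fun ?g" unfolding smooth_fun_def
    using deriv_HH[OF apos asum bpos] EE_deriv[OF apos asum bpos]
    by (metis real_differentiable_def)
  fix x
  show "0 \<le> ?g x" "?g x \<le> 1" using HH_bounds[OF apos asum bpos] by auto
  show "x \<le> c \<Longrightarrow> ?g x = 0" using HH_zero[OF apos asum bpos] by auto
  show "x \<ge> c + b + suminf a \<Longrightarrow> ?g x = 1" using HH_one[OF apos asum bpos, where x=x and k=0] by simp
  fix j
  show "\<bar>(deriv ^^ j) ?g x\<bar> \<le> (\<Prod>i<j. 2 / a i)"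
    using EE_bound[OF apos asum bpos, where j=j and k=0 and x=x] deriv_HH[OF apos asum bpos, where j=j] by simp
qed



lemma phi_star_ge:
  assumes wf: "weight_function \<omega>" and t: "t \<ge> 0" and s: "s \<ge> 0"
  shows "s * t - \<omega> (exp s) \<le> phi_star \<omega> t"
proof -
  have lo: "ln \<in> o[at_top](\<omega>)" and nn: "\<forall>t\<ge>0. \<omega> t \<ge> 0"
    using wf by (auto simp: weight_function_def)
  have "eventually (\<lambda>x. norm (ln x) \<le> (1/(t+1)) * norm (\<omega> x)) at_top"
    by (rule landau_o.smallD[OF lo]) (use t in simp)
  then obtain X where X: "\<And>x. x \<ge> X \<Longrightarrow> \<bar>ln x\<bar> \<le> (1/(t+1)) * \<bar>\<omega> x\<bar>"
    by (auto simp: eventually_at_top_linorder)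
  have bd: "s' * t - \<omega> (exp s') \<le> \<bar>ln (max X 1)\<bar> * t" if s': "s' \<ge> 0" for s'
  proof (cases "exp s' \<ge> X")
    case True
    have w: "\<omega> (exp s') \<ge> 0" using nn by simp
    have "s' \<le> (1/(t+1)) * \<omega> (exp s')" using X[OF True] s' w by simp
    then have "(t+1) * s' \<le> \<omega> (exp s')" using t by (simp add: field_simps)
    then have "s' * t - \<omega> (exp s') \<le> 0" using s' by (simp add: algebra_simps)
    then show ?thesis using t by (meson abs_ge_zero order_trans zero_le_mult_iff)
  next
    case False
    then have "exp s' < max X 1" by simp
    then have "s' < ln (max X 1)" by (metis exp_less_cancel_iff exp_ln max.strict_coboundedI2 zero_less_one)
    then have "s' \<le> \<bar>ln (max X 1)\<bar>" by simp
    then have "s' * t \<le> \<bar>ln (max X 1)\<bar> * t" using t by (simp add: mult_right_mono)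
    moreover have "\<omega> (exp s') \<ge> 0" using nn by simp
    ultimately show ?thesis by simp
  qed
  have "bdd_above ((\<lambda>s. s * t - \<omega> (exp s)) ` {0..})"
    by (rule bdd_aboveI2[where M="\<bar>ln (max X 1)\<bar> * t"]) (use bd in auto)
  then show ?thesis unfolding phi_star_def by (rule cSUP_upper2[where x=s]) (use s in auto)
qed

lemma weight_matrix_ge:
  assumes wf: "weight_function \<omega>" and m: "m > 0" and T: "T \<ge> 1"
  shows "exp (real j * ln T - \<omega> T / m) \<le> weight_matrix \<omega> m j"
proof -
  have "ln T * (m * real j) - \<omega> (exp (ln T)) \<le> phi_star \<omega> (m * real j)"
    by (rule phi_star_ge[OF wf]) (use m T in auto)
  then have "ln T * (m * real j) - \<omega> T \<le> phi_star \<omega> (m * real j)" using T by simp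
  then have "(ln T * (m * real j) - \<omega> T) / m \<le> phi_star \<omega> (m * real j) / m"
    using m by (intro divide_right_mono) auto
  moreover have "(ln T * (m * real j) - \<omega> T) / m = real j * ln T - \<omega> T / m"
    using m by (simp add: field_simps)
  ultimately have "real j * ln T - \<omega> T / m \<le> phi_star \<omega> (m * real j) / m" by simp
  then show ?thesis unfolding weight_matrix_def by simp
qed

lemma sigma_star_ge:
  assumes wf: "weight_function \<sigma>" and so: "\<sigma> \<in> o[at_top](\<lambda>t. t)" and u: "u > 0" and s: "s \<ge> 0"
  shows "\<sigma> s - s * u \<le> sigma_star \<sigma> u"
proof -
  have mo: "mono_on {0..} \<sigma>" and nn: "\<forall>t\<ge>0. \<sigma> t \<ge> 0"
    using wf by (auto simp: weight_function_def)
  have "eventually (\<lambda>x. norm (\<sigma> x) \<le> u * norm x) at_top"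
    by (rule landau_o.smallD[OF so u])
  then obtain X where X: "\<And>x. x \<ge> X \<Longrightarrow> \<bar>\<sigma> x\<bar> \<le> u * \<bar>x\<bar>"
    by (auto simp: eventually_at_top_linorder)
  have bd: "\<sigma> s' - s' * u \<le> \<sigma> (max X 0)" if s': "s' \<ge> 0" for s'
  proof (cases "s' \<ge> X")
    case True
    then have "\<sigma> s' \<le> u * s'" using X[OF True] s' by simp
    then show ?thesis using nn[rule_format, of "max X 0"] by (simp add: mult.commute)
  next
    case False
    then have "\<sigma> s' \<le> \<sigma> (max X 0)" using mo s' by (intro mono_onD[OF mo]) auto
    then show ?thesis using u s' by (smt (verit) mult_nonneg_nonneg)
  qed
  have "bdd_above ((\<lambda>s. \<sigma> s - s * u) ` {0..})"
    by (rule bdd_aboveI2[where M="\<sigma> (max X 0)"]) (use bd in auto)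
  then show ?thesis unfolding sigma_star_def by (rule cSUP_upper2[where x=s]) (use s in auto)
qed

lemma dyadic:
  fixes \<omega> :: "real \<Rightarrow> real"
  assumes mo: "mono_on {0..} \<omega>" and nn: "\<And>t. t \<ge> 0 \<Longrightarrow> \<omega> t \<ge> 0" and t: "t > 0" and K: "K \<ge> 0"
    and I: "(\<integral>\<^sup>+ u\<in>{1..}. ennreal (\<omega> (t * u) / u\<^sup>2) \<partial>lborel) \<le> ennreal K"
  shows "summable (\<lambda>p. \<omega> (t * 2^p) / 2^p) \<and> (\<Sum>p. \<omega> (t * 2^p) / 2^p) \<le> 4 * K"
proof -
  define c where "c p = ennreal (\<omega> (t * 2^p) / (2^(p+1))\<^sup>2)" for p :: nat
  define A where "A p = {(2::real)^p..<2^(p+1)}" for p :: nat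
  have pw: "(\<Sum>p<P. c p * indicator (A p) u) \<le> ennreal (\<omega> (t * u) / u\<^sup>2) * indicator {1..} u" for P u
  proof (induction P)
    case 0 then show ?case by simp
  next
    case (Suc P)
    show ?case
    proof (cases "u \<in> A P")
      case True
      then have u1: "2^P \<le> u" "u < 2^(P+1)" by (auto simp: A_def)
      have u0: "u \<ge> 1" using u1(1) by (meson one_le_power order_trans one_le_numeral)
      have z: "(\<Sum>p<P. c p * indicator (A p) u) = 0"
      proof (rule sum.neutral, intro ballI)
        fix p assume "p \<in> {..<P}"
        then have "(2::real)^(p+1) \<le> 2^P" by (intro power_increasing) auto
        then have "u \<notin> A p" using u1 by (auto simp: A_def)
        then show "c p * indicator (A p) u = 0" by simp
      qed
      have "\<omega> (t * 2^P) / (2^(P+1))\<^sup>2 \<le> \<omega> (t * u) / u\<^sup>2"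
      proof (rule frac_le)
        show "0 \<le> \<omega> (t * u)" using nn t u0 by simp
        show "\<omega> (t * 2^P) \<le> \<omega> (t * u)" using t u1 by (intro mono_onD[OF mo]) auto
        show "0 < u\<^sup>2" using u0 by simp
        show "u\<^sup>2 \<le> (2^(P+1))\<^sup>2" using u1 u0 by (intro power_mono) auto
      qed
      then have "c P \<le> ennreal (\<omega> (t * u) / u\<^sup>2)" unfolding c_def by (rule ennreal_leI)
      then show ?thesis using z True u0 by simp
    next
      case False
      then show ?thesis using Suc by simp
    qed
  qed
  have meas: "(\<lambda>u. c p * indicator (A p) u) \<in> borel_measurable lborel" for p
    unfolding A_def by measurable
  have intc: "(\<integral>\<^sup>+ u. c p * indicator (A p) u \<partial>lborel) = ennreal (\<omega> (t * 2^p) / 2^p / 4)" for p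
  proof -
    have "(\<integral>\<^sup>+ u. c p * indicator (A p) u \<partial>lborel) = c p * emeasure lborel (A p)"
      by (rule nn_integral_cmult_indicator) (simp add: A_def)
    also have "\<dots> = c p * ennreal (2^p)" by (simp add: A_def)
    also have "\<dots> = ennreal (\<omega> (t * 2^p) / (2^(p+1))\<^sup>2 * 2^p)"
      unfolding c_def by (subst ennreal_mult) (use nn t in auto)
    also have "\<omega> (t * 2^p) / (2^(p+1))\<^sup>2 * 2^p = \<omega> (t * 2^p) / 2^p / 4"
      by (simp add: power2_eq_square field_simps power_add)
    finally show ?thesis .
  qed
  have part: "(\<Sum>p<P. \<omega> (t * 2^p) / 2^p) \<le> 4 * K" for P
  proof -
    have "(\<Sum>p<P. ennreal (\<omega> (t * 2^p) / 2^p / 4)) = (\<integral>\<^sup>+ u. (\<Sum>p<P. c p * indicator (A p) u) \<partial>lborel)"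
      by (subst nn_integral_sum) (use meas intc in auto)
    also have "\<dots> \<le> (\<integral>\<^sup>+ u\<in>{1..}. ennreal (\<omega> (t * u) / u\<^sup>2) \<partial>lborel)"
      by (rule nn_integral_mono) (rule pw)
    also have "\<dots> \<le> ennreal K" by (rule I)
    finally have "ennreal (\<Sum>p<P. \<omega> (t * 2^p) / 2^p / 4) \<le> ennreal K"
      using nn t by (subst sum_ennreal[symmetric]) auto
    then have "(\<Sum>p<P. \<omega> (t * 2^p) / 2^p / 4) \<le> K" using K by simp
    moreover have "(\<Sum>p<P. \<omega> (t * 2^p) / 2^p / 4) = (\<Sum>p<P. \<omega> (t * 2^p) / 2^p) / 4"
      by (rule sum_divide_distrib[symmetric])
    ultimately show ?thesis by simp
  qed
  have nn2: "0 \<le> \<omega> (t * 2^p) / 2^p" for p :: nat using nn t by simp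
  have s: "summable (\<lambda>p. \<omega> (t * 2^p) / 2^p)"
    by (rule summableI_nonneg_bounded[OF nn2 part])
  show ?thesis using s suminf_le_const[OF s part] by simp
qed



context
  fixes \<omega> :: "real \<Rightarrow> real" and S m :: real
  assumes mo: "mono_on {0..} \<omega>" and nn: "\<And>t. t \<ge> 0 \<Longrightarrow> \<omega> t \<ge> 0"
    and S1: "S \<ge> 1" and mpos: "m > 0" and summ: "summable (\<lambda>p. \<omega> (S * 2^p) / 2^p)"
begin

primrec ee :: "nat \<Rightarrow> nat" where
  "ee 0 = 0"
| "ee (Suc j) = (if \<omega> (S * 2^(Suc (ee j))) - \<omega> (S * 2^(ee j)) \<le> m * real (Suc j) * ln 2
                 then Suc (ee j) else ee j)"

definition tau :: "nat \<Rightarrow> real" where "tau j = S * 2^(ee j)"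

lemma tau_ge: "tau j \<ge> S"
  unfolding tau_def using S1 by simp

lemma tau_pos: "tau j > 0" using tau_ge[of j] S1 by simp

lemma young_tel: "(\<Sum>i<j. ln (tau i)) \<le> \<omega> S / m + real j * ln (tau j) - \<omega> (tau j) / m"
proof (induction j)
  case 0 then show ?case by (simp add: tau_def)
next
  case (Suc j)
  have key: "\<omega> (tau (Suc j)) - \<omega> (tau j) \<le> m * real (Suc j) * (ln (tau (Suc j)) - ln (tau j))"
  proof (cases "\<omega> (S * 2^(Suc (ee j))) - \<omega> (S * 2^(ee j)) \<le> m * real (Suc j) * ln 2")
    case True
    have e: "ee (Suc j) = Suc (ee j)" using True by simp
    have t2: "tau (Suc j) = 2 * tau j" using e by (simp add: tau_def)
    have l: "ln (tau (Suc j)) - ln (tau j) = ln 2"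
      unfolding t2 using tau_pos[of j] by (simp add: ln_mult)
    show ?thesis unfolding l using True by (simp add: tau_def e)
  next
    case False
    then show ?thesis by (simp add: tau_def)
  qed
  have "(\<Sum>i<Suc j. ln (tau i)) = (\<Sum>i<j. ln (tau i)) + ln (tau j)" by simp
  also have "\<dots> \<le> \<omega> S / m + real (Suc j) * ln (tau j) - \<omega> (tau j) / m"
    using Suc by (simp add: algebra_simps)
  also have "\<dots> \<le> \<omega> S / m + real (Suc j) * ln (tau (Suc j)) - \<omega> (tau (Suc j)) / m"
  proof -
    have "(\<omega> (tau (Suc j)) - \<omega> (tau j)) / m \<le> real (Suc j) * (ln (tau (Suc j)) - ln (tau j))"
      using key mpos by (simp add: divide_le_eq mult.commute mult.left_commute)
    then show ?thesis by (simp add: algebra_simps diff_divide_distrib)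
  qed
  finally show ?case .
qed

definition AA :: "real \<Rightarrow> real" where "AA t = \<omega> (2 * t) / (m * ln 2)"

definition hh :: "nat \<Rightarrow> real" where "hh q = AA (S * 2^q) / (S * 2^q)"

lemma hh_eq: "hh q = (2 / (m * ln 2 * S)) * (\<omega> (S * 2^(Suc q)) / 2^(Suc q))"
  unfolding hh_def AA_def using S1 mpos by (simp add: field_simps)

lemma AA_nn: "t \<ge> 0 \<Longrightarrow> AA t \<ge> 0"
  unfolding AA_def using nn mpos by simp

lemma hh_summ: "summable hh"
proof -
  have "summable (\<lambda>q. \<omega> (S * 2^(Suc q)) / 2^(Suc q))"
    using summable_ignore_initial_segment[OF summ, of 1] by simp
  then show ?thesis unfolding hh_eq by (rule summable_mult)
qed

lemma hh_nn: "hh q \<ge> 0"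
  unfolding hh_def using AA_nn[of "S * 2^q"] S1 by simp

definition GG :: "nat \<Rightarrow> real" where "GG k = (\<Sum>q. hh (q + Suc k))"

lemma GG_rec: "GG k = hh (Suc k) + GG (Suc k)"
proof -
  have s: "summable (\<lambda>q. hh (q + Suc k))" using summable_ignore_initial_segment[OF hh_summ, of "Suc k"] .
  have "(\<Sum>q. hh (Suc q + Suc k)) = (\<Sum>q. hh (q + Suc k)) - hh (0 + Suc k)"
    by (rule suminf_split_head[OF s])
  then show ?thesis unfolding GG_def by simp
qed

lemma GG_nn: "GG k \<ge> 0"
  unfolding GG_def by (rule suminf_nonneg[OF summable_ignore_initial_segment[OF hh_summ, of "Suc k"]]) (rule hh_nn)

definition Phi :: "nat \<Rightarrow> real" where
  "Phi j = 2 / tau j + max 0 (AA (tau j) - real j) / tau j + GG (ee j)"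

lemma Phi_nn: "Phi j \<ge> 0"
  unfolding Phi_def using tau_pos[of j] GG_nn[of "ee j"] by simp

lemma Phi_step: "1 / tau j \<le> Phi j - Phi (Suc j)"
proof (cases "\<omega> (S * 2^(Suc (ee j))) - \<omega> (S * 2^(ee j)) \<le> m * real (Suc j) * ln 2")
  case True
  let ?t = "tau j"
  have e: "ee (Suc j) = Suc (ee j)" using True by simp
  have t2: "tau (Suc j) = 2 * ?t" unfolding tau_def e by simp
  have st: "S * 2^(Suc (ee j)) = 2 * ?t" by (simp add: tau_def)
  have g: "GG (ee j) = AA (2 * ?t) / (2 * ?t) + GG (Suc (ee j))"
    using GG_rec[of "ee j"] unfolding hh_def st .
  have tp: "?t > 0" by (rule tau_pos)
  have a2: "AA (2 * ?t) \<ge> 0" using AA_nn tp by simp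
  have "max 0 (AA (2 * ?t) - real (Suc j)) \<le> AA (2 * ?t)" using a2 by simp
  then have m1: "max 0 (AA (2 * ?t) - real (Suc j)) / (2 * ?t) \<le> AA (2 * ?t) / (2 * ?t)"
    using tp by (intro divide_right_mono) auto
  have m0: "0 \<le> max 0 (AA ?t - real j) / ?t" using tp by simp
  have "Phi j - Phi (Suc j) = 2 / ?t - 2 / (2 * ?t) + max 0 (AA ?t - real j) / ?t
      - max 0 (AA (2 * ?t) - real (Suc j)) / (2 * ?t) + AA (2 * ?t) / (2 * ?t)"
    unfolding Phi_def e t2 g by simp
  moreover have "2 / ?t - 2 / (2 * ?t) = 1 / ?t" using tp by (simp add: field_simps)
  ultimately show ?thesis using m1 m0 by linarith
next
  case False
  let ?t = "tau j"
  have e: "ee (Suc j) = ee j" using False by simp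
  have t2: "tau (Suc j) = ?t" unfolding tau_def e by simp
  have tp: "?t > 0" by (rule tau_pos)
  have "m * real (Suc j) * ln 2 < \<omega> (2 * ?t) - \<omega> ?t"
    using False by (simp add: tau_def mult.assoc mult.left_commute)
  moreover have "\<omega> ?t \<ge> 0" using nn tp by simp
  ultimately have "m * ln 2 * real (Suc j) < \<omega> (2 * ?t)" by (simp add: mult_ac)
  then have "real (Suc j) < AA ?t" unfolding AA_def using mpos by (simp add: field_simps)
  then have "max 0 (AA ?t - real j) - max 0 (AA ?t - real (Suc j)) = 1" by simp
  then have "max 0 (AA ?t - real j) / ?t - max 0 (AA ?t - real (Suc j)) / ?t = 1 / ?t"
    by (simp add: diff_divide_distrib[symmetric])
  then show ?thesis unfolding Phi_def e t2 by simp
qed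

lemma inv_tau_partial: "(\<Sum>j<J. 1 / tau j) \<le> Phi 0"
proof -
  have "(\<Sum>j<J. 1 / tau j) \<le> Phi 0 - Phi J"
  proof (induction J)
    case 0 then show ?case by simp
  next
    case (Suc J) then show ?case using Phi_step[of J] by simp
  qed
  then show ?thesis using Phi_nn[of J] by simp
qed

lemma Phi0_bound: "Phi 0 \<le> (2 + 4 * (\<Sum>p. \<omega> (S * 2^p) / 2^p) / m) / S"
proof -
  define Q where "Q = (\<Sum>p. \<omega> (S * 2^p) / 2^p)"
  have t0: "tau 0 = S" by (simp add: tau_def)
  have a0: "AA S \<ge> 0" using AA_nn S1 by simp
  have p0: "Phi 0 = 2 / S + AA S / S + GG 0" unfolding Phi_def t0 using a0 by simp
  have p1: "AA S / S + GG 0 = (\<Sum>q. hh q)"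
  proof -
    have "(\<Sum>q. hh (Suc q)) = suminf hh - hh 0" by (rule suminf_split_head[OF hh_summ])
    then show ?thesis unfolding GG_def hh_def by simp
  qed
  have p2: "(\<Sum>q. hh q) = (2 / (m * ln 2 * S)) * (\<Sum>q. \<omega> (S * 2^(Suc q)) / 2^(Suc q))"
  proof -
    have "summable (\<lambda>q. \<omega> (S * 2^(Suc q)) / 2^(Suc q))"
      using summable_ignore_initial_segment[OF summ, of 1] by simp
    then show ?thesis unfolding hh_eq by (rule suminf_mult)
  qed
  have p3: "(\<Sum>q. \<omega> (S * 2^(Suc q)) / 2^(Suc q)) \<le> Q"
  proof -
    have "(\<Sum>q. \<omega> (S * 2^(Suc q)) / 2^(Suc q)) = Q - \<omega> (S * 2^0) / 2^0"
      unfolding Q_def by (rule suminf_split_head[OF summ])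
    moreover have "\<omega> (S * 2^0) / 2^0 \<ge> 0" using nn S1 by simp
    ultimately show ?thesis by simp
  qed
  have l2: "ln (2::real) \<ge> 1/2" using ln2_ge_two_thirds by simp
  have "(2 / (m * ln 2 * S)) \<le> 4 / (m * S)"
    using l2 mpos S1 by (simp add: field_simps)
  have Qn: "Q \<ge> 0" unfolding Q_def by (rule suminf_nonneg[OF summ]) (use nn S1 in simp)
  have c1: "(2 / (m * ln 2 * S)) * (\<Sum>q. \<omega> (S * 2^(Suc q)) / 2^(Suc q)) \<le> (4 / (m * S)) * Q"
  proof (rule mult_mono)
    show "2 / (m * ln 2 * S) \<le> 4 / (m * S)" by fact
    show "(\<Sum>q. \<omega> (S * 2^(Suc q)) / 2^(Suc q)) \<le> Q" by (rule p3)
    show "0 \<le> (\<Sum>q. \<omega> (S * 2^(Suc q)) / 2^(Suc q))"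
      by (rule suminf_nonneg) (use summable_ignore_initial_segment[OF summ, of 1] nn S1 in auto)
  qed (use mpos S1 Qn in auto)
  have "Phi 0 \<le> 2 / S + (4 / (m * S)) * Q" using c1 p0 p1 p2 by simp
  also have "\<dots> = (2 + 4 * Q / m) / S" using mpos S1 by (simp add: field_simps)
  finally show ?thesis unfolding Q_def by simp
qed

lemma inv_tau_summable: "summable (\<lambda>j. 1 / tau j)"
  by (rule summableI_nonneg_bounded[OF _ inv_tau_partial]) (use tau_pos in \<open>simp add: less_imp_le\<close>)

lemma inv_tau_sum: "(\<Sum>j. 1 / tau j) \<le> (2 + 4 * (\<Sum>p. \<omega> (S * 2^p) / 2^p) / m) / S"
  using suminf_le_const[OF inv_tau_summable inv_tau_partial] Phi0_bound by linarith

end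


theorem lemma4p6:
  fixes \<omega> \<sigma> :: "real \<Rightarrow> real"
  assumes "weight_function \<omega>" and "non_quasianalytic \<omega>" and "concave_weight \<omega>"
    and "heir \<omega> \<sigma>"
  shows "\<forall>n::nat. n > 0 \<longrightarrow>
    (\<exists>m::nat. m > 0 \<and> (\<exists>M::real. M > 0 \<and> (\<exists>r0::real. 0 < r0 \<and> r0 < 1/2 \<and>
      (\<forall>r. 0 < r \<and> r < r0 \<longrightarrow>
        (\<exists>g :: real \<Rightarrow> real. smooth_fun g \<and>
           (\<forall>x. 0 \<le> g x \<and> g x \<le> 1) \<and>
           (\<forall>x. x \<le> -r \<longrightarrow> g x = 0) \<and>
           (\<forall>x. x \<ge> r \<longrightarrow> g x = 1) \<and>
           (\<forall>x j. \<bar>(deriv ^^ j) g x\<bar> / weight_matrix \<omega> (real m) j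
                   \<le> M * exp (sigma_star \<sigma> (real n * r) / real n)))))))"
proof (intro allI impI)
  fix n :: nat assume n0: "n > 0"
  have wfo: "weight_function \<omega>" by fact
  have mo: "mono_on {0..} \<omega>" and nno: "\<And>t. t \<ge> 0 \<Longrightarrow> \<omega> t \<ge> 0"
    using assms(1) by (auto simp: weight_function_def)
  have wfs: "weight_function \<sigma>" and so: "\<sigma> \<in> o[at_top](\<lambda>t. t)"
    and "\<exists>C>0. \<forall>t>0. (\<integral>\<^sup>+ u\<in>{1..}. ennreal (\<omega> (t * u) / u\<^sup>2) \<partial>lborel) \<le> ennreal (C * \<sigma> t + C)"
    using assms(4) by (auto simp: heir_def)
  then obtain C where C0: "C > 0"
    and CI: "\<And>t. t > 0 \<Longrightarrow> (\<integral>\<^sup>+ u\<in>{1..}. ennreal (\<omega> (t * u) / u\<^sup>2) \<partial>lborel) \<le> ennreal (C * \<sigma> t + C)"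
    by blast
  have sc: "continuous_on {0..} \<sigma>" and smo: "mono_on {0..} \<sigma>" and snn: "\<And>t. t \<ge> 0 \<Longrightarrow> \<sigma> t \<ge> 0"
    and slim: "filterlim \<sigma> at_top at_top"
    using wfs by (auto simp: weight_function_def)
  define \<nu> where "\<nu> = real n"
  have nu1: "\<nu> \<ge> 1" using n0 by (simp add: \<nu>_def)
  define m :: nat where "m = nat \<lceil>128 * C * \<nu>\<rceil> + 1"
  have m0: "m > 0" by (simp add: m_def)
  have mge: "real m \<ge> 128 * C * \<nu>" unfolding m_def by linarith
  have mpos: "real m > 0" using m0 by simp
  have "eventually (\<lambda>x. 48 * \<nu> + 3 \<le> \<sigma> x) at_top"
    using slim by (simp add: filterlim_at_top)
  then obtain X0 where X0: "\<And>x. x \<ge> X0 \<Longrightarrow> 48 * \<nu> + 3 \<le> \<sigma> x"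
    by (auto simp: eventually_at_top_linorder)
  define S0 where "S0 = max X0 1"
  have S01: "S0 \<ge> 1" and sS0: "\<sigma> S0 \<ge> 48 * \<nu> + 3" using X0 by (auto simp: S0_def)
  define r0 where "r0 = min (1/4) (\<sigma> S0 / (3 * \<nu> * S0))"
  have r0pos: "r0 > 0" using sS0 S01 nu1 by (simp add: r0_def)
  have r0half: "r0 < 1/2" by (simp add: r0_def)
  show "\<exists>m::nat. m > 0 \<and> (\<exists>M::real. M > 0 \<and> (\<exists>r0::real. 0 < r0 \<and> r0 < 1/2 \<and>
      (\<forall>r. 0 < r \<and> r < r0 \<longrightarrow>
        (\<exists>g :: real \<Rightarrow> real. smooth_fun g \<and>
           (\<forall>x. 0 \<le> g x \<and> g x \<le> 1) \<and>
           (\<forall>x. x \<le> -r \<longrightarrow> g x = 0) \<and>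
           (\<forall>x. x \<ge> r \<longrightarrow> g x = 1) \<and>
           (\<forall>x j. \<bar>(deriv ^^ j) g x\<bar> / weight_matrix \<omega> (real m) j
                   \<le> M * exp (sigma_star \<sigma> (real n * r) / real n))))))"
  proof (rule exI[of _ m], intro conjI m0, rule exI[of _ "exp 1"], intro conjI exp_gt_zero,
      rule exI[of _ r0], intro conjI r0pos r0half allI impI)
    fix r :: real assume r: "0 < r \<and> r < r0"
    then have rpos: "r > 0" and rr0: "r < r0" by auto
    have nr: "\<nu> * r > 0" using rpos nu1 by simp
    have "eventually (\<lambda>x. norm (\<sigma> x) \<le> (\<nu> * r) * norm x) at_top"
      by (rule landau_o.smallD[OF so nr])
    then obtain X1 where X1: "\<And>x. x \<ge> X1 \<Longrightarrow> \<bar>\<sigma> x\<bar> \<le> (\<nu> * r) * \<bar>x\<bar>"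
      by (auto simp: eventually_at_top_linorder)
    define S1 where "S1 = max X1 S0"
    have S1ge: "S1 \<ge> S0" by (simp add: S1_def)
    have "\<bar>\<sigma> S1\<bar> \<le> (\<nu> * r) * \<bar>S1\<bar>" using X1 by (simp add: S1_def)
    then have sS1: "\<sigma> S1 \<le> (\<nu> * r) * S1" using S1ge S01 by simp
    define k where "k x = 3 * \<nu> * r * x - \<sigma> x" for x
    have kS0: "k S0 \<le> 0"
    proof -
      have "r < \<sigma> S0 / (3 * \<nu> * S0)" using rr0 by (simp add: r0_def)
      then have "r * (3 * \<nu> * S0) < \<sigma> S0" using nu1 S01 by (simp add: pos_less_divide_eq)
      then show ?thesis by (simp add: k_def mult_ac)
    qed
    have kS1: "0 \<le> k S1"
    proof -
      have "0 \<le> 2 * \<nu> * r * S1" using nu1 rpos S1ge S01 by simp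
      then show ?thesis using sS1 by (simp add: k_def algebra_simps)
    qed
    have kc: "continuous_on {S0..S1} k"
      unfolding k_def
      by (intro continuous_intros continuous_on_subset[OF sc]) (use S01 in auto)
    obtain S where S: "S \<ge> S0" "S \<le> S1" "k S = 0"
      using IVT'[of k S0 0 S1, OF kS0 kS1 S1ge kc] by blast
    have S1': "S \<ge> 1" using S S01 by simp
    have sS: "\<sigma> S = 3 * \<nu> * r * S" using S(3) by (simp add: k_def)
    have sSge: "\<sigma> S \<ge> 48 * \<nu> + 3"
      using sS0 mono_onD[OF smo, of S0 S] S S01 by simp
    define I where "I = C * \<sigma> S + C"
    have I0: "I \<ge> 0" using C0 snn[of S] S1' by (simp add: I_def)
    from dyadic[OF mo nno _ I0, of S] CI[of S] S1'
    have dy: "summable (\<lambda>p. \<omega> (S * 2^p) / 2^p)" "(\<Sum>p. \<omega> (S * 2^p) / 2^p) \<le> 4 * I"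
      by (auto simp: I_def)
    define Q where "Q = (\<Sum>p. \<omega> (S * 2^p) / 2^p)"
    have QI: "Q \<le> 4 * I" using dy by (simp add: Q_def)
    have wSQ: "\<omega> S \<le> Q"
    proof -
      have "(\<Sum>p<1. \<omega> (S * 2^p) / 2^p) \<le> Q"
        unfolding Q_def by (rule sum_le_suminf[OF dy(1)]) (use nno S1' in auto)
      then show ?thesis by simp
    qed
    note ctx = mo nno S1' mpos dy(1)
    define t where "t = tau \<omega> S (real m)"
    have tpos: "\<And>i. t i > 0" using tau_pos[OF ctx] by (simp add: t_def)
    have tge: "\<And>i. t i \<ge> S" using tau_ge[OF ctx] by (simp add: t_def)
    have tsum: "summable (\<lambda>j. 1 / t j)" using inv_tau_summable[OF ctx] by (simp add: t_def)
    have tsb: "(\<Sum>j. 1 / t j) \<le> (2 + 4 * Q / real m) / S"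
      using inv_tau_sum[OF ctx] by (simp add: t_def Q_def)
    define a where "a i = 2 / t i" for i
    have apos: "\<And>i. a i > 0" using tpos by (simp add: a_def)
    have asum: "summable a" unfolding a_def using summable_mult[OF tsum, of 2] by simp
    have asuminf: "suminf a = 2 * (\<Sum>j. 1 / t j)"
      unfolding a_def using suminf_mult[OF tsum, of 2] by simp
    have len: "suminf a \<le> r"
    proof -
      have e1: "32 * I / real m \<le> (\<sigma> S + 1) / (4 * \<nu>)"
      proof -
        have "32 * I * (4 * \<nu>) = (128 * C * \<nu>) * (\<sigma> S + 1)" by (simp add: I_def algebra_simps)
        also have "\<dots> \<le> real m * (\<sigma> S + 1)"
          using mge snn[of S] S1' by (intro mult_right_mono) auto
        finally show ?thesis using mpos nu1 by (simp add: divide_le_eq le_divide_eq mult_ac)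
      qed
      have e2: "4 + (\<sigma> S + 1) / (4 * \<nu>) \<le> r * S"
      proof -
        have "r * S = \<sigma> S / (3 * \<nu>)" using sS nu1 by (simp add: field_simps)
        moreover have "4 + (\<sigma> S + 1) / (4 * \<nu>) \<le> \<sigma> S / (3 * \<nu>)"
        proof -
          have "48 * \<nu> + 3 \<le> \<sigma> S" by (rule sSge)
          moreover have "(4 + (\<sigma> S + 1) / (4 * \<nu>)) * (12 * \<nu>) = 48 * \<nu> + 3 * \<sigma> S + 3"
            using nu1 by (simp add: field_simps)
          moreover have "\<sigma> S / (3 * \<nu>) * (12 * \<nu>) = 4 * \<sigma> S"
            using nu1 by (simp add: field_simps)
          ultimately have "(4 + (\<sigma> S + 1) / (4 * \<nu>)) * (12 * \<nu>) \<le> \<sigma> S / (3 * \<nu>) * (12 * \<nu>)"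
            by linarith
          then show ?thesis using nu1 mult_le_cancel_right_pos[of "12 * \<nu>"] by (smt (verit))
        qed
        ultimately show ?thesis by simp
      qed
      have "8 * Q / real m \<le> 32 * I / real m"
        using QI mpos by (simp add: divide_right_mono)
      then have "4 + 8 * Q / real m \<le> r * S" using e1 e2 by linarith
      then have "(4 + 8 * Q / real m) / S \<le> r" using S1' by (simp add: divide_le_eq mult.commute)
      moreover have "suminf a \<le> (4 + 8 * Q / real m) / S"
      proof -
        have "2 * ((2 + 4 * Q / real m) / S) = (4 + 8 * Q / real m) / S" by (simp add: field_simps)
        then show ?thesis using asuminf tsb by linarith
      qed
      ultimately show ?thesis by linarith
    qed
    obtain g where g: "smooth_fun g" "\<forall>x. 0 \<le> g x \<and> g x \<le> 1" "\<forall>x. x \<le> -r \<longrightarrow> g x = 0"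
      "\<forall>x. x \<ge> -r + r + suminf a \<longrightarrow> g x = 1"
      "\<forall>j x. \<bar>(deriv ^^ j) g x\<bar> \<le> (\<Prod>i<j. 2 / a i)"
      using construction[OF apos asum rpos, of "-r"] by blast
    show "\<exists>g. smooth_fun g \<and> (\<forall>x. 0 \<le> g x \<and> g x \<le> 1) \<and> (\<forall>x. x \<le> - r \<longrightarrow> g x = 0) \<and>
          (\<forall>x. r \<le> x \<longrightarrow> g x = 1) \<and>
          (\<forall>x j. \<bar>(deriv ^^ j) g x\<bar> / weight_matrix \<omega> (real m) j \<le> exp 1 * exp (sigma_star \<sigma> (real n * r) / real n))"
    proof (intro exI[of _ g] conjI allI impI)
      show "smooth_fun g" "\<And>x. 0 \<le> g x" "\<And>x. g x \<le> 1" "\<And>x. x \<le> -r \<Longrightarrow> g x = 0"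
        using g by auto
      show "\<And>x. r \<le> x \<Longrightarrow> g x = 1" using g(4) len by auto
      fix x j
      have W0: "weight_matrix \<omega> (real m) j > 0" by (simp add: weight_matrix_def)
      have p1: "(\<Prod>i<j. 2 / a i) = (\<Prod>i<j. t i)" unfolding a_def using tpos by simp
      have p2: "(\<Prod>i<j. t i) = exp (\<Sum>i<j. ln (t i))"
        by (simp add: exp_sum tpos)
      have yt: "(\<Sum>i<j. ln (t i)) \<le> \<omega> S / real m + real j * ln (t j) - \<omega> (t j) / real m"
        using young_tel[OF ctx, of j] by (simp add: t_def)
      have wm: "exp (real j * ln (t j) - \<omega> (t j) / real m) \<le> weight_matrix \<omega> (real m) j"
        by (rule weight_matrix_ge[OF wfo mpos]) (use tge[of j] S1' in auto)
      have "\<bar>(deriv ^^ j) g x\<bar> \<le> exp (\<Sum>i<j. ln (t i))" using g(5) p1 p2 by metis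
      also have "\<dots> \<le> exp (\<omega> S / real m) * exp (real j * ln (t j) - \<omega> (t j) / real m)"
        using yt by (simp add: exp_add[symmetric])
      also have "\<dots> \<le> exp (\<omega> S / real m) * weight_matrix \<omega> (real m) j"
        using wm by simp
      finally have d1: "\<bar>(deriv ^^ j) g x\<bar> / weight_matrix \<omega> (real m) j \<le> exp (\<omega> S / real m)"
        using W0 by (simp add: divide_le_eq mult.commute)
      have sst: "\<sigma> S - S * (\<nu> * r) \<le> sigma_star \<sigma> (\<nu> * r)"
        by (rule sigma_star_ge[OF wfs so nr]) (use S1' in simp)
      have "\<omega> S / real m \<le> 1 + sigma_star \<sigma> (\<nu> * r) / \<nu>"
      proof -
        have a1: "\<omega> S / real m \<le> 4 * I / real m" using wSQ QI mpos by (simp add: divide_right_mono)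
        have a2: "4 * I / real m \<le> (\<sigma> S + 1) / (32 * \<nu>)"
        proof -
          have "4 * I * (32 * \<nu>) = (128 * C * \<nu>) * (\<sigma> S + 1)" by (simp add: I_def algebra_simps)
          also have "\<dots> \<le> real m * (\<sigma> S + 1)"
            using mge snn[of S] S1' by (intro mult_right_mono) auto
          finally show ?thesis using mpos nu1 by (simp add: divide_le_eq le_divide_eq mult_ac)
        qed
        have a3: "(\<sigma> S + 1) / (32 * \<nu>) \<le> 1 + (\<sigma> S - S * (\<nu> * r)) / \<nu>"
        proof -
          have "S * (\<nu> * r) = \<sigma> S / 3" using sS by (simp add: algebra_simps)
          then have "\<sigma> S - S * (\<nu> * r) = (2/3) * \<sigma> S" by linarith
          then have "(\<sigma> S - S * (\<nu> * r)) / \<nu> = (2/3) * \<sigma> S / \<nu>" by simp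
          moreover have "(\<sigma> S + 1) / (32 * \<nu>) \<le> 1 + (2/3) * \<sigma> S / \<nu>"
          proof -
            have "(\<sigma> S + 1) / (32 * \<nu>) = (\<sigma> S / 32) / \<nu> + 1 / (32 * \<nu>)" by (simp add: add_divide_distrib)
            moreover have "(\<sigma> S / 32) / \<nu> \<le> (2/3) * \<sigma> S / \<nu>"
              using snn[of S] S1' nu1 by (intro divide_right_mono) auto
            moreover have "1 / (32 * \<nu>) \<le> 1" using nu1 by simp
            ultimately show ?thesis by linarith
          qed
          ultimately show ?thesis by simp
        qed
        have a4: "(\<sigma> S - S * (\<nu> * r)) / \<nu> \<le> sigma_star \<sigma> (\<nu> * r) / \<nu>"
          using sst nu1 by (simp add: divide_right_mono)
        show ?thesis using a1 a2 a3 a4 by linarith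
      qed
      then have "exp (\<omega> S / real m) \<le> exp 1 * exp (sigma_star \<sigma> (real n * r) / real n)"
        by (simp add: exp_add[symmetric] \<nu>_def)
      with d1 show "\<bar>(deriv ^^ j) g x\<bar> / weight_matrix \<omega> (real m) j \<le> exp 1 * exp (sigma_star \<sigma> (real n * r) / real n)"
        by linarith
    qed
  qed
qed


end
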